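(* Let $G=(V,E)$ be a bridged graph that contains an induced cycle of length greater than three, let $C$ be a shortest such induced cycle, of length $k$, and suppose $x\notin C$ is such that $C\cup\{x\}$ induces a uniquely centered wheel. For $v\in V\setminus (C\cup\{x\})$, let $A(v)$ denote the set of neighbours of $v$ in $C$. If $A(v)\ne\emptyset$, then (a) $A(v)$ induces a path with at most three vertices (i.e. consists of at most three consecutive vertices of $C$); and (b) if $v$ is not adjacent to $x$, then $A(v)$ induces a path with at most two vertices.
   Context: $G$ is bridged if it contains no isometric cycle (a cycle whose distances equal distances in $G$) of length greater than three. $C\cup\{x\}$ induces a wheel means $C$ is an induced cycle and $x$ is adjacent to all vertices of $C$; it is uniquely centered if there is no vertex $y\ne x$ such that $y$ is adjacent to all vertices of $C$ (i.e. $C\cup\{y\}$ is also an induced wheel). *)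

theory Defs
  imports Main
begin

definition graph :: "'a set \<Rightarrow> ('a \<Rightarrow> 'a \<Rightarrow> bool) \<Rightarrow> bool" where
  "graph V E \<longleftrightarrow> (\<forall>u v. E u v \<longrightarrow> u \<in> V \<and> v \<in> V \<and> E v u \<and> u \<noteq> v)"

definition walk_len :: "('a \<Rightarrow> 'a \<Rightarrow> bool) \<Rightarrow> 'a \<Rightarrow> 'a \<Rightarrow> nat \<Rightarrow> bool" where
  "walk_len E u v n \<longleftrightarrow> (\<exists>ps. length ps = Suc n \<and> ps ! 0 = u \<and> ps ! n = v
      \<and> (\<forall>i<n. E (ps ! i) (ps ! Suc i)))"

text \<open>Graph distance (only meaningful for connected pairs).\<close>
definition gdist :: "('a \<Rightarrow> 'a \<Rightarrow> bool) \<Rightarrow> 'a \<Rightarrow> 'a \<Rightarrow> nat" where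
  "gdist E u v = (LEAST n. walk_len E u v n)"

definition is_cycle :: "'a set \<Rightarrow> ('a \<Rightarrow> 'a \<Rightarrow> bool) \<Rightarrow> 'a list \<Rightarrow> bool" where
  "is_cycle V E cs \<longleftrightarrow> length cs \<ge> 3 \<and> distinct cs \<and> set cs \<subseteq> V
     \<and> (\<forall>i<length cs. E (cs ! i) (cs ! (Suc i mod length cs)))"

definition cyc_dist :: "nat \<Rightarrow> nat \<Rightarrow> nat \<Rightarrow> nat" where
  "cyc_dist k i j = (let d = (if i \<le> j then j - i else i - j) in min d (k - d))"

definition induced_cycle :: "'a set \<Rightarrow> ('a \<Rightarrow> 'a \<Rightarrow> bool) \<Rightarrow> 'a list \<Rightarrow> bool" where
  "induced_cycle V E cs \<longleftrightarrow> is_cycle V E cs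
     \<and> (\<forall>i<length cs. \<forall>j<length cs. E (cs ! i) (cs ! j) \<longrightarrow> cyc_dist (length cs) i j = 1)"

definition isometric_cycle :: "'a set \<Rightarrow> ('a \<Rightarrow> 'a \<Rightarrow> bool) \<Rightarrow> 'a list \<Rightarrow> bool" where
  "isometric_cycle V E cs \<longleftrightarrow> is_cycle V E cs
     \<and> (\<forall>i<length cs. \<forall>j<length cs. gdist E (cs ! i) (cs ! j) = cyc_dist (length cs) i j)"

definition bridged :: "'a set \<Rightarrow> ('a \<Rightarrow> 'a \<Rightarrow> bool) \<Rightarrow> bool" where
  "bridged V E \<longleftrightarrow> (\<forall>cs. isometric_cycle V E cs \<longrightarrow> length cs \<le> 3)"

definition induced_wheel :: "'a set \<Rightarrow> ('a \<Rightarrow> 'a \<Rightarrow> bool) \<Rightarrow> 'a list \<Rightarrow> 'a \<Rightarrow> bool" where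
  "induced_wheel V E cs x \<longleftrightarrow> induced_cycle V E cs \<and> x \<in> V \<and> (\<forall>c\<in>set cs. E x c)"

definition uniquely_centered_wheel :: "'a set \<Rightarrow> ('a \<Rightarrow> 'a \<Rightarrow> bool) \<Rightarrow> 'a list \<Rightarrow> 'a \<Rightarrow> bool" where
  "uniquely_centered_wheel V E cs x \<longleftrightarrow> induced_wheel V E cs x
     \<and> \<not> (\<exists>y. y \<noteq> x \<and> induced_wheel V E cs y)"

text \<open>S consists of m consecutive vertices of the cycle cs, for some 1 \<le> m \<le> b
  (for an induced cycle of length > 3 and b \<le> 3 these induce a path).\<close>
definition consecutive_on_cycle :: "'a list \<Rightarrow> 'a set \<Rightarrow> nat \<Rightarrow> bool" where
  "consecutive_on_cycle cs S b \<longleftrightarrow> (\<exists>i m. i < length cs \<and> 1 \<le> m \<and> m \<le> b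
     \<and> S = {cs ! ((i + j) mod length cs) | j. j < m})"

end

theory Submission
  imports Defs "HOL-Number_Theory.Cong"
begin


lemma walk0: "walk_len E a b 0 \<longleftrightarrow> a = b"
  unfolding walk_len_def
  by (auto intro!: exI[of _ "[a]"])

lemma walk1: "E a b \<Longrightarrow> walk_len E a b 1"
  unfolding walk_len_def by (rule exI[of _ "[a,b]"]) auto

lemma walk2: "E a c \<Longrightarrow> E c b \<Longrightarrow> walk_len E a b 2"
  unfolding walk_len_def
  apply (rule exI[of _ "[a,c,b]"])
  by (auto simp: numeral_eq_Suc less_Suc_eq)

lemma walk1_iff: "walk_len E a b 1 \<longleftrightarrow> E a b"
  unfolding walk_len_def by (auto intro!: exI[of _ "[a,b]"])

lemma gd0: "gdist E a a = 0"
  unfolding gdist_def using walk0 by (metis (mono_tags) Least_eq_0)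

lemma gd1: assumes "E a b" "a \<noteq> b" shows "gdist E a b = 1"
  unfolding gdist_def
proof (rule Least_equality)
  from assms(1) show "walk_len E a b 1" by (rule walk1)
  fix y assume "walk_len E a b y" then show "1 \<le> y"
    using assms walk0 by (metis less_one not_le)
qed

lemma gd2: assumes "E a c" "E c b" "a \<noteq> b" "\<not> E a b" shows "gdist E a b = 2"
  unfolding gdist_def
proof (rule Least_equality)
  from assms show "walk_len E a b 2" by (intro walk2)
  fix y assume "walk_len E a b y" then show "2 \<le> y"
    using assms walk0 walk1_iff
    by (metis One_nat_def less_2_cases not_le)
qed

lemma all4: "(\<forall>i<(4::nat). P i) = (P 0 \<and> P 1 \<and> P 2 \<and> P 3)"
  by (auto simp add: numeral_eq_Suc less_Suc_eq)
lemma all4s: "(\<forall>i<Suc (Suc (Suc (Suc 0))). P i) = (P 0 \<and> P 1 \<and> P 2 \<and> P 3)"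
  by (auto simp add: numeral_eq_Suc less_Suc_eq)

lemma four_cycle:
  assumes g: "graph V E" and V: "a \<in> V" "b \<in> V" "c \<in> V" "d \<in> V"
    and dist: "distinct [a,b,c,d]"
    and e: "E a b" "E b c" "E c d" "E d a" and ne: "\<not> E a c" "\<not> E b d"
  shows "isometric_cycle V E [a,b,c,d]"
proof -
  have sym: "\<And>u w. E u w \<Longrightarrow> E w u" using g unfolding graph_def by blast
  have e': "E b a" "E c b" "E d c" "E a d" using e sym by auto
  have ne': "\<not> E c a" "\<not> E d b" using ne sym by auto
  have cyc: "is_cycle V E [a,b,c,d]"
    unfolding is_cycle_def using V dist e
    by (simp only: all4s length_Cons list.size) simp
  have g1: "gdist E a b = 1" "gdist E b c = 1" "gdist E c d = 1" "gdist E d a = 1"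
     "gdist E b a = 1" "gdist E c b = 1" "gdist E d c = 1" "gdist E a d = 1"
    using dist e e' gd1[of E a b] gd1[of E b c] gd1[of E c d] gd1[of E d a] gd1[of E b a] gd1[of E c b] gd1[of E d c] gd1[of E a d] by auto
  have g2: "gdist E a c = 2" "gdist E c a = 2" "gdist E b d = 2" "gdist E d b = 2"
    using e e' gd2[of E a b c] gd2[of E c d a] gd2[of E b c d] gd2[of E d a b]
      dist ne ne' by auto
  have cd: "cyc_dist 4 0 1 = 1" "cyc_dist 4 1 0 = 1" "cyc_dist 4 1 2 = 1" "cyc_dist 4 2 1 = 1"
    "cyc_dist 4 2 3 = 1" "cyc_dist 4 3 2 = 1" "cyc_dist 4 0 3 = 1" "cyc_dist 4 3 0 = 1"
    "cyc_dist 4 0 2 = 2" "cyc_dist 4 2 0 = 2" "cyc_dist 4 1 3 = 2" "cyc_dist 4 3 1 = 2"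
    "cyc_dist 4 0 0 = 0" "cyc_dist 4 1 1 = 0" "cyc_dist 4 2 2 = 0" "cyc_dist 4 3 3 = 0"
    by (simp_all add: cyc_dist_def)
  have "\<forall>i<4. \<forall>j<4. gdist E ([a,b,c,d]!i) ([a,b,c,d]!j) = cyc_dist 4 i j"
    unfolding all4 using g1 g2 cd by (simp add: gd0)
  moreover have "length [a,b,c,d] = 4" by simp
  ultimately show ?thesis unfolding isometric_cycle_def using cyc by metis
qed

definition nb :: "nat \<Rightarrow> nat \<Rightarrow> nat \<Rightarrow> bool" where
  "nb k a b \<longleftrightarrow> b = (if Suc a = k then 0 else Suc a) \<or> a = (if Suc b = k then 0 else Suc b)"

definition good :: "'a set \<Rightarrow> ('a \<Rightarrow> 'a \<Rightarrow> bool) \<Rightarrow> nat \<Rightarrow> 'a list \<Rightarrow> bool" where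
  "good V E k L \<longleftrightarrow> length L = k \<and> distinct L \<and> set L \<subseteq> V
     \<and> (\<forall>a<k. \<forall>b<k. E (L!a) (L!b) \<longleftrightarrow> nb k a b)"

lemma sucmod: "a < k \<Longrightarrow> Suc a mod k = (if Suc a = k then 0 else Suc a)"
  by (simp add: Suc_lessI)

lemma cyc_nb: "3 \<le> k \<Longrightarrow> a < k \<Longrightarrow> b < k \<Longrightarrow> cyc_dist k a b = 1 \<longleftrightarrow> nb k a b"
  unfolding cyc_dist_def nb_def Let_def by (auto split: if_splits)

lemma nb_mod: "a < k \<Longrightarrow> b < k \<Longrightarrow> nb k a b \<longleftrightarrow> (b = Suc a mod k \<or> a = Suc b mod k)"
  unfolding nb_def by (simp add: sucmod)

lemma induced_iff:
  assumes g: "graph V E"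
  shows "induced_cycle V E L \<longleftrightarrow> 3 \<le> length L \<and> good V E (length L) L"
proof
  have sym: "\<And>u w. E u w \<Longrightarrow> E w u" using g unfolding graph_def by blast
  assume ic: "induced_cycle V E L"
  then have cy: "is_cycle V E L" and ind: "\<And>i j. i<length L \<Longrightarrow> j<length L \<Longrightarrow> E (L ! i) (L ! j) \<Longrightarrow> cyc_dist (length L) i j = 1"
    unfolding induced_cycle_def by auto
  then have k3: "3 \<le> length L" and ed: "\<And>i. i<length L \<Longrightarrow> E (L ! i) (L ! (Suc i mod length L))"
    unfolding is_cycle_def by auto
  have "E (L!a) (L!b) \<longleftrightarrow> nb (length L) a b" if ab: "a < length L" "b < length L" for a b
  proof
    assume "E (L!a) (L!b)" then show "nb (length L) a b"
      using ind[OF ab] cyc_nb[OF k3 ab] by simp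
  next
    assume "nb (length L) a b"
    then have "b = Suc a mod length L \<or> a = Suc b mod length L"
      using nb_mod[OF ab] by simp
    then show "E (L!a) (L!b)"
    proof
      assume "b = Suc a mod length L" then show ?thesis using ed[OF ab(1)] by simp
    next
      assume "a = Suc b mod length L" then show ?thesis using ed[OF ab(2)] sym by simp
    qed
  qed
  then show "3 \<le> length L \<and> good V E (length L) L"
    using k3 cy unfolding good_def is_cycle_def by blast
next
  assume a: "3 \<le> length L \<and> good V E (length L) L"
  then have k3: "3 \<le> length L" and gd: "good V E (length L) L" by auto
  have adj: "\<And>a b. a < length L \<Longrightarrow> b < length L \<Longrightarrow> E (L!a) (L!b) \<longleftrightarrow> nb (length L) a b"
    using gd unfolding good_def by blast
  have "is_cycle V E L" unfolding is_cycle_def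
  proof (intro conjI allI impI)
    fix i assume i: "i < length L"
    have "Suc i mod length L < length L" using i by (simp add: sucmod) (metis list.size(3) not_less_zero)
    then show "E (L ! i) (L ! (Suc i mod length L))"
      using adj[OF i] nb_mod[OF i] by blast
  qed (use gd k3 in \<open>simp_all add: good_def\<close>)
  moreover have "\<forall>i<length L. \<forall>j<length L. E (L ! i) (L ! j) \<longrightarrow> cyc_dist (length L) i j = 1"
    using adj cyc_nb[OF k3] by blast
  ultimately show "induced_cycle V E L" unfolding induced_cycle_def by blast
qed

lemma modeq: "((b::nat) + r) mod k = (a + r) mod k \<longleftrightarrow> b mod k = a mod k"
  using cong_add_rcancel_nat[of b r a k] unfolding cong_def by simp

lemma nb_rot: assumes "0 < k" "a < k" "b < k"
  shows "nb k ((a + r) mod k) ((b + r) mod k) \<longleftrightarrow> nb k a b"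
proof -
  have 1: "Suc ((a + r) mod k) mod k = (Suc a + r) mod k" "Suc ((b + r) mod k) mod k = (Suc b + r) mod k"
    by (simp_all add: mod_Suc_eq)
  have 2: "(b + r) mod k = Suc (a + r) mod k \<longleftrightarrow> b = Suc a mod k"
    using modeq[of b r k "Suc a"] assms by simp
  have 3: "(a + r) mod k = Suc (b + r) mod k \<longleftrightarrow> a = Suc b mod k"
    using modeq[of a r k "Suc b"] assms by simp
  show ?thesis
    using assms by (simp add: nb_mod 1 2 3)
qed

lemma good_rot: assumes "good V E k L" "0 < k" shows "good V E k (rotate r L)"
  using assms unfolding good_def
  by (auto simp: nth_rotate nb_rot add.commute)

lemma nbk: "a' \<le> t - s \<Longrightarrow> b' \<le> t-s \<Longrightarrow> s<t \<Longrightarrow> t<k \<Longrightarrow> t-s+2 \<le> k \<Longrightarrow> nb k (s+a') (s+b') \<longleftrightarrow> (b' = Suc a' \<or> a' = Suc b')"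
  unfolding nb_def by (cases "Suc (s+a') = k"; cases "Suc (s+b') = k"; simp; arith)
lemma nbn: "a' \<le> m \<Longrightarrow> b' \<le> m \<Longrightarrow> nb (m+2) (Suc a') (Suc b') \<longleftrightarrow> (b' = Suc a' \<or> a' = Suc b')"
  unfolding nb_def by (cases "Suc (Suc a') = m+2"; cases "Suc (Suc b') = m+2"; simp; arith)

lemma seg:
  assumes g: "graph V E" and gd: "good V E k L"
    and minc: "\<forall>D. induced_cycle V E D \<longrightarrow> 3 < length D \<longrightarrow> k \<le> length D"
    and v: "v \<in> V" "v \<notin> set L"
    and st: "s < t" "t < k" "2 \<le> t - s" "t - s + 2 \<le> k"
    and adj: "E v (L!s)" "E v (L!t)" and nadj: "\<forall>u. s<u \<longrightarrow> u<t \<longrightarrow> \<not> E v (L!u)"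
  shows "k \<le> t - s + 2"
proof -
  have sym: "\<And>u w. E u w \<Longrightarrow> E w u" using g unfolding graph_def by blast
  have irr: "\<And>u. \<not> E u u" using g unfolding graph_def by blast
  have lenL: "length L = k" and dL: "distinct L" and VL: "set L \<subseteq> V"
    and adjL: "\<And>a b. a < k \<Longrightarrow> b < k \<Longrightarrow> E (L!a) (L!b) \<longleftrightarrow> nb k a b"
    using gd unfolding good_def by auto
  define n where "n = t - s + 2"
  define D where "D = v # map (\<lambda>u. L!u) [s..<Suc t]"
  have lenD: "length D = n" using st by (simp add: D_def n_def)
  have D0: "D!0 = v" by (simp add: D_def)
  have DS: "D!(Suc u) = L!(s+u)" if "u \<le> t - s" for u
    using that st by (simp add: D_def nth_append)
  have n4: "4 \<le> n" using st by (simp add: n_def)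
  have dist: "distinct D"
  proof -
    have "inj_on (\<lambda>u. L!u) (set [s..<Suc t])"
      using inj_on_nth[OF dL, of "set [s..<Suc t]"] st lenL by auto
    moreover have "v \<notin> (\<lambda>u. L!u) ` set [s..<Suc t]"
      using v st lenL by auto
    ultimately show ?thesis by (simp add: D_def distinct_map)
  qed
  have setD: "set D \<subseteq> V" using v VL st lenL by (auto simp: D_def)
  have adjD: "E (D!a) (D!b) \<longleftrightarrow> nb n a b" if ab: "a < n" "b < n" for a b
  proof (cases a)
    case 0
    show ?thesis
    proof (cases b)
      case 0 then show ?thesis using \<open>a = 0\<close> D0 irr n4 by (simp add: nb_def)
    next
      case (Suc b')
      have b': "b' \<le> t - s" using ab Suc by (simp add: n_def)
      have "E v (L!(s+b')) \<longleftrightarrow> b' = 0 \<or> b' = t - s"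
      proof (cases "b' = 0 \<or> b' = t - s")
        case True then show ?thesis using adj st by auto
      next
        case False then have "s < s+b'" "s+b' < t" using b' by auto
        then show ?thesis using nadj False by auto
      qed
      moreover have "nb n 0 (Suc b') \<longleftrightarrow> b' = 0 \<or> b' = t - s"
        using n4 b' by (auto simp: nb_def n_def)
      ultimately show ?thesis using 0 Suc D0 DS[OF b'] by simp
    qed
  next
    case (Suc a')
    have a': "a' \<le> t - s" using ab Suc by (simp add: n_def)
    show ?thesis
    proof (cases b)
      case 0
      have "E v (L!(s+a')) \<longleftrightarrow> a' = 0 \<or> a' = t - s"
      proof (cases "a' = 0 \<or> a' = t - s")
        case True then show ?thesis using adj st by auto
      next
        case False then have "s < s+a'" "s+a' < t" using a' by auto
        then show ?thesis using nadj False by auto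
      qed
      moreover have "nb n (Suc a') 0 \<longleftrightarrow> a' = 0 \<or> a' = t - s"
        using n4 a' by (auto simp: nb_def n_def)
      ultimately show ?thesis using 0 Suc D0 DS[OF a'] sym by metis
    next
      case (Suc b')
      have b': "b' \<le> t - s" using ab Suc by (simp add: n_def)
      have "E (L!(s+a')) (L!(s+b')) \<longleftrightarrow> nb k (s+a') (s+b')"
        using adjL a' b' st by simp
      moreover have "nb k (s+a') (s+b') \<longleftrightarrow> nb n (Suc a') (Suc b')"
        using nbk[OF a' b' st(1,2,4)] nbn[OF a' b'] by (simp add: n_def)
      ultimately show ?thesis using \<open>a = Suc a'\<close> Suc DS[OF a'] DS[OF b'] by simp
    qed
  qed
  have "good V E n D" unfolding good_def using lenD dist setD adjD by blast
  then have "induced_cycle V E D" using induced_iff[OF g] lenD n4 by simp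
  then have "k \<le> n" using minc lenD n4 by auto
  then show ?thesis by (simp add: n_def)
qed


lemma main_norm:
  assumes g: "graph V E" and br: "bridged V E" and gd: "good V E k L" and k5: "5 \<le> k"
    and minc: "\<forall>D. induced_cycle V E D \<longrightarrow> 3 < length D \<longrightarrow> k \<le> length D"
    and x: "x \<notin> set L" "x \<in> V" "\<forall>c\<in>set L. E x c"
    and v: "v \<in> V" "v \<notin> set L" "v \<noteq> x"
    and a0: "E v (L!0)" and ak: "\<not> E v (L!(k-1))"
  shows "\<exists>m. 1 \<le> m \<and> m \<le> 3 \<and> {c \<in> set L. E v c} = {L!j | j. j < m} \<and> (\<not> E v x \<longrightarrow> m \<le> 2)"
proof -
  have sym: "\<And>u w. E u w \<Longrightarrow> E w u" using g unfolding graph_def by blast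
  have lenL: "length L = k" and dL: "distinct L" and VL: "set L \<subseteq> V"
    and adjL: "\<And>a b. a < k \<Longrightarrow> b < k \<Longrightarrow> E (L!a) (L!b) \<longleftrightarrow> nb k a b"
    using gd unfolding good_def by auto
  have inL: "\<And>j. j < k \<Longrightarrow> L!j \<in> set L" using lenL by simp
  have neq: "\<And>i j. i < k \<Longrightarrow> j < k \<Longrightarrow> i \<noteq> j \<Longrightarrow> L!i \<noteq> L!j"
    using dL lenL by (simp add: nth_eq_iff_index_eq)
  have notbr: False if "isometric_cycle V E [a,b,c,d]" for a b c d
  proof -
    have "length [a,b,c,d] \<le> 3" using br that unfolding bridged_def by blast
    then show False by simp
  qed
  define m where "m = (LEAST j. \<not> E v (L!j))"
  have mk: "m \<le> k - 1" unfolding m_def using ak by (rule Least_le)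
  have nm: "\<not> E v (L!m)" unfolding m_def using ak by (rule LeastI)
  have bm: "\<And>j. j < m \<Longrightarrow> E v (L!j)" unfolding m_def using not_less_Least by blast
  have m1: "1 \<le> m" using nm a0 by (cases m) auto
  have rest: "\<not> E v (L!e)" if "m \<le> e" "e < k" for e
  proof (rule ccontr)
    assume "\<not> \<not> E v (L!e)"
    then have ex: "m \<le> e \<and> e < k \<and> E v (L!e)" using that by simp
    define e0 where "e0 = (LEAST e. m \<le> e \<and> e < k \<and> E v (L!e))"
    have e0: "m \<le> e0" "e0 < k" "E v (L!e0)" using LeastI[of "\<lambda>e. m \<le> e \<and> e < k \<and> E v (L!e)", OF ex]
      unfolding e0_def by auto
    have be0: "\<not> E v (L!u)" if u: "m \<le> u" "u < e0" for u
    proof -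
      have "\<not> (m \<le> u \<and> u < k \<and> E v (L!u))"
        using not_less_Least[of u "\<lambda>e. m \<le> e \<and> e < k \<and> E v (L!e)"] u(2) unfolding e0_def by blast
      then show ?thesis using u e0(2) by simp
    qed
    have me0: "m < e0" using e0(1,3) nm by (cases "m = e0") auto
    have ek: "e0 \<noteq> k - 1" using e0 ak by auto
    have "k \<le> e0 - (m - 1) + 2"
    proof (rule seg[OF g gd minc v(1,2)])
      show "m - 1 < e0" "e0 < k" "2 \<le> e0 - (m - 1)" "e0 - (m - 1) + 2 \<le> k"
        using me0 e0 m1 ek by auto
      show "E v (L ! (m - 1))" using bm m1 by simp
      show "E v (L ! e0)" by (rule e0(3))
      show "\<forall>u. m - 1 < u \<longrightarrow> u < e0 \<longrightarrow> \<not> E v (L ! u)"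
      proof (intro allI impI)
        fix u assume "m - 1 < u" "u < e0"
        then show "\<not> E v (L ! u)" using be0[of u] by simp
      qed
    qed
    then have ee: "e0 = k - 2" "m = 1" using me0 e0(2) m1 ek by arith+
    have "isometric_cycle V E [v, L!(k-2), L!(k-1), L!0]"
    proof (rule four_cycle[OF g])
      show "v \<in> V" "L!(k-2) \<in> V" "L!(k-1) \<in> V" "L!0 \<in> V" using v VL inL k5 by auto
      have i0: "L!0 \<in> set L" "L!(k-2) \<in> set L" "L!(k-1) \<in> set L" using inL k5 by auto
      have "L!(k-2) \<noteq> L!(k-1)" "L!(k-2) \<noteq> L!0" "L!(k-1) \<noteq> L!0"
        using neq[of "k-2" "k-1"] neq[of "k-2" 0] neq[of "k-1" 0] k5 by auto
      then show "distinct [v, L!(k-2), L!(k-1), L!0]" using v(2) i0 by auto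
      show "E v (L!(k-2))" using e0 ee by simp
      have kk: "Suc (k-2) = k-1" "Suc (k-1) = k" using k5 by arith+
      show "E (L!(k-2)) (L!(k-1))" using adjL[of "k-2" "k-1"] k5 kk by (simp add: nb_def)
      show "E (L!(k-1)) (L!0)" using adjL[of "k-1" 0] k5 kk by (simp add: nb_def)
      show "E (L!0) v" using a0 by (rule sym)
      show "\<not> E v (L!(k-1))" by (rule ak)
      show "\<not> E (L!(k-2)) (L!0)" using adjL[of "k-2" 0] k5 kk by (simp add: nb_def)
    qed
    then show False by (rule notbr)
  qed
  have Aeq: "{c \<in> set L. E v c} = {L!j | j. j < m}"
  proof (intro set_eqI iffI)
    fix c assume "c \<in> {c \<in> set L. E v c}"
    then obtain j where j: "j < k" "c = L!j" "E v (L!j)" using lenL by (auto simp: in_set_conv_nth)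
    then have "j < m" using rest by (meson not_le)
    then show "c \<in> {L!j | j. j < m}" using j by blast
  next
    fix c assume "c \<in> {L!j | j. j < m}"
    then obtain j where "j < m" "c = L!j" by blast
    then show "c \<in> {c \<in> set L. E v c}" using bm inL mk k5 by auto
  qed
  have m3: "m \<le> 3"
  proof (rule ccontr)
    assume "\<not> m \<le> 3"
    then have m4: "4 \<le> m" by simp
    define L2 where "L2 = rotate (m - 1) L"
    have gd2: "good V E k L2" unfolding L2_def using good_rot[OF gd] k5 by simp
    have L2n: "\<And>j. j < k \<Longrightarrow> L2!j = L!((j + (m - 1)) mod k)" unfolding L2_def using lenL
      by (simp add: nth_rotate add.commute)
    have "k \<le> (k - m + 1) - 0 + 2"
    proof (rule seg[OF g gd2 minc v(1)])
      show "v \<notin> set L2" using v unfolding L2_def by simp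
      show "0 < k - m + 1" "k - m + 1 < k" "2 \<le> k - m + 1 - 0" "k - m + 1 - 0 + 2 \<le> k"
        using m4 mk by auto
      show "E v (L2 ! 0)" using L2n[of 0] bm m1 k5 mk by simp
      have "(k - m + 1 + (m - 1)) mod k = 0" using m4 mk by simp
      then show "E v (L2 ! (k - m + 1))" using L2n[of "k - m + 1"] a0 m4 mk by simp
      show "\<forall>u. 0 < u \<longrightarrow> u < k - m + 1 \<longrightarrow> \<not> E v (L2 ! u)"
      proof (intro allI impI)
        fix u assume u: "0 < u" "u < k - m + 1"
        then have "(u + (m - 1)) mod k = u + (m - 1)" using m4 by simp
        moreover have "m \<le> u + (m - 1)" "u + (m - 1) < k" using u m4 by auto
        ultimately show "\<not> E v (L2 ! u)" using L2n[of u] rest u m4 by simp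
      qed
    qed
    then show False using m4 mk by simp
  qed
  have mb: "\<not> E v x \<longrightarrow> m \<le> 2"
  proof (rule impI, rule ccontr)
    assume nx: "\<not> E v x" and "\<not> m \<le> 2"
    then have m3': "m = 3" using m3 by simp
    have "isometric_cycle V E [v, L!0, x, L!2]"
    proof (rule four_cycle[OF g])
      show "v \<in> V" "L!0 \<in> V" "x \<in> V" "L!2 \<in> V" using v x VL inL k5 by auto
      have i0: "L!0 \<in> set L" "L!2 \<in> set L" using inL k5 by auto
      have "L!0 \<noteq> L!2" using neq[of 0 2] k5 by simp
      then show "distinct [v, L!0, x, L!2]" using v x(1) i0 by auto
      show "E v (L!0)" by (rule a0)
      have "E x (L!0)" using x(3) inL k5 by simp
      then show "E (L!0) x" by (rule sym)
      show "E x (L!2)" using x(3) inL k5 by simp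
      have "E v (L!2)" using bm m3' by simp
      then show "E (L!2) v" by (rule sym)
      show "\<not> E v x" by (rule nx)
      show "\<not> E (L!0) (L!2)" using adjL k5 by (simp add: nb_def)
    qed
    then show False by (rule notbr)
  qed
  show ?thesis using m1 m3 Aeq mb by blast
qed


theorem mainTheorem14:
  fixes V :: "'a set" and E :: "'a \<Rightarrow> 'a \<Rightarrow> bool" and C :: "'a list" and x v :: 'a
  assumes "graph V E"
    and "bridged V E"
    and "induced_cycle V E C" and "length C > 3"
    and "\<And>D. induced_cycle V E D \<Longrightarrow> length D > 3 \<Longrightarrow> length C \<le> length D"
    and "x \<notin> set C" and "uniquely_centered_wheel V E C x"
    and "v \<in> V" and "v \<notin> set C" and "v \<noteq> x"
    and "{c \<in> set C. E v c} \<noteq> {}"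
  shows "consecutive_on_cycle C {c \<in> set C. E v c} 3
    \<and> (\<not> E v x \<longrightarrow> consecutive_on_cycle C {c \<in> set C. E v c} 2)"
proof -
  note g = assms(1) and br = assms(2) and ic = assms(3)
  define k where "k = length C"
  have gd: "good V E k C" using induced_iff[OF g] ic unfolding k_def by blast
  have lenC: "length C = k" and dC: "distinct C" and VC: "set C \<subseteq> V"
    and adjC: "\<And>a b. a < k \<Longrightarrow> b < k \<Longrightarrow> E (C!a) (C!b) \<longleftrightarrow> nb k a b"
    using gd unfolding good_def by auto
  have minc: "\<forall>D. induced_cycle V E D \<longrightarrow> 3 < length D \<longrightarrow> k \<le> length D"
    using assms(5) unfolding k_def by blast
  have xw: "x \<in> V" "\<forall>c\<in>set C. E x c" using assms(7)
    unfolding uniquely_centered_wheel_def induced_wheel_def by auto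
  have k4: "4 \<le> k" using assms(4) unfolding k_def by simp
  have k5: "5 \<le> k"
  proof (rule ccontr)
    assume "\<not> 5 \<le> k"
    then have kk: "k = 4" using k4 by simp
    have Ceq: "C = [C!0, C!1, C!2, C!3]"
    proof (rule nth_equalityI)
      show "length C = length [C!0, C!1, C!2, C!3]" using lenC kk by simp
      fix i assume "i < length C"
      then have "i = 0 \<or> i = 1 \<or> i = 2 \<or> i = 3" using lenC kk by auto
      then show "C!i = [C!0, C!1, C!2, C!3]!i" by auto
    qed
    have neq: "\<And>i j. i < k \<Longrightarrow> j < k \<Longrightarrow> i \<noteq> j \<Longrightarrow> C!i \<noteq> C!j"
      using dC lenC by (simp add: nth_eq_iff_index_eq)
    have "isometric_cycle V E [C!0, C!1, C!2, C!3]"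
    proof (rule four_cycle[OF g])
      show "C!0 \<in> V" "C!1 \<in> V" "C!2 \<in> V" "C!3 \<in> V" using VC lenC kk by auto
      show "distinct [C!0, C!1, C!2, C!3]" using dC Ceq by simp
      show "E (C!0) (C!1)" "E (C!1) (C!2)" "E (C!2) (C!3)" "E (C!3) (C!0)"
        "\<not> E (C!0) (C!2)" "\<not> E (C!1) (C!3)"
        using adjC kk by (simp_all add: nb_def)
    qed
    then have "length [C!0, C!1, C!2, C!3] \<le> 3" using br unfolding bridged_def by blast
    then show False by simp
  qed
  obtain a where a: "a < k" "\<not> E v (C!a)"
  proof -
    have "\<not> (\<forall>c\<in>set C. E v c)"
    proof
      assume "\<forall>c\<in>set C. E v c"
      then have "induced_wheel V E C v" using ic assms(8) unfolding induced_wheel_def by blast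
      then show False using assms(7,10) unfolding uniquely_centered_wheel_def by blast
    qed
    then obtain c where "c \<in> set C" "\<not> E v c" by blast
    then show ?thesis using that lenC by (metis in_set_conv_nth)
  qed
  define C1 where "C1 = rotate (a + 1) C"
  have gd1: "good V E k C1" unfolding C1_def by (rule good_rot[OF gd]) (use k5 in simp)
  have C1n: "C1!j = C!((a + 1 + j) mod k)" if "j < k" for j
  proof -
    have "j < length C" using that lenC by simp
    from nth_rotate[OF this, of "a+1"] show ?thesis unfolding C1_def lenC .
  qed
  have "(a + 1 + (k - 1)) mod k = a" using a k5 by simp
  then have c1k: "\<not> E v (C1!(k-1))" using C1n[of "k-1"] a k5 by simp
  obtain c where c: "c \<in> set C" "E v c" using assms(11) by blast
  have sC1: "set C1 = set C" unfolding C1_def by simp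
  have lC1: "length C1 = k" using gd1 unfolding good_def by simp
  have "c \<in> set C1" using c(1) sC1 by simp
  then obtain j where j0: "j < length C1" "C1!j = c" by (auto simp: in_set_conv_nth)
  then have j: "j < k" "C1!j = c" using lC1 by auto
  define i where "i = (LEAST j. E v (C1!j))"
  have vj: "E v (C1!j)" using j c by simp
  have ij: "i \<le> j" unfolding i_def using vj by (rule Least_le)
  have ai: "E v (C1!i)" unfolding i_def using vj by (rule LeastI)
  have bi: "\<not> E v (C1!j')" if "j' < i" for j'
    using not_less_Least[of j' "\<lambda>j. E v (C1!j)"] that unfolding i_def by simp
  define C2 where "C2 = rotate i C1"
  have gd2: "good V E k C2" unfolding C2_def by (rule good_rot[OF gd1]) (use k5 in simp)
  have C2n: "C2!j = C1!((i + j) mod k)" if "j < k" for j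
  proof -
    have "j < length C1" using that lC1 by simp
    from nth_rotate[OF this, of i] show ?thesis unfolding C2_def lC1 .
  qed
  have i_k: "i < k" using ij j(1) by simp
  have "C2!0 = C1!i" using C2n[of 0] i_k by simp
  then have c20: "E v (C2!0)" using ai by simp
  have c2k: "\<not> E v (C2!(k-1))"
  proof (cases "i = 0")
    case True
    have "C2!(k-1) = C1!((i + (k-1)) mod k)" using C2n[of "k-1"] k5 by simp
    also have "(i + (k-1)) mod k = k - 1" using True k5 by (simp add: mod_less)
    finally show ?thesis using c1k by simp
  next
    case False
    have "C2!(k-1) = C1!((i + (k-1)) mod k)" using C2n[of "k-1"] k5 by simp
    also have "(i + (k - 1)) mod k = i - 1"
    proof -
      have "i + (k - 1) = (i - 1) + k" using k5 False by arith
      moreover have "i - 1 < k" using i_k by arith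
      ultimately show ?thesis by (metis mod_add_self2 mod_less)
    qed
    finally have "C2!(k-1) = C1!(i-1)" .
    moreover have "\<not> E v (C1!(i-1))" using bi[of "i-1"] False by simp
    ultimately show ?thesis by simp
  qed
  have sC2: "set C2 = set C" unfolding C2_def C1_def by simp
  obtain m where m: "1 \<le> m" "m \<le> 3" "{c \<in> set C2. E v c} = {C2!j | j. j < m}"
      "\<not> E v x \<longrightarrow> m \<le> 2"
    using main_norm[OF g br gd2 k5 minc, of x v] xw assms(6,8,9,10) sC2 c20 c2k by auto
  define r where "r = i + (a + 1)"
  have C2r: "C2 = rotate r C" unfolding C2_def C1_def r_def by (rule rotate_rotate)
  have C2c: "C2!j = C!((r mod k + j) mod k)" if "j < k" for j
  proof -
    have "j < length C" using that lenC by simp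
    from nth_rotate[OF this, of r] have "C2!j = C!((r + j) mod k)" unfolding C2r lenC .
    also have "(r + j) mod k = (r mod k + j) mod k" by (simp add: mod_add_left_eq)
    finally show ?thesis .
  qed
  have eqj: "C2!j = C!((r mod k + j) mod k)" if "j < m" for j
  proof -
    have "j < k" using that m(2) k5 by simp
    then show ?thesis by (rule C2c)
  qed
  have "{c \<in> set C. E v c} = {C2!j | j. j < m}" using m(3) sC2 by simp
  also have "\<dots> = (\<lambda>j. C2!j) ` {j. j < m}" by (rule setcompr_eq_image)
  also have "\<dots> = (\<lambda>j. C!((r mod k + j) mod k)) ` {j. j < m}"
    by (rule image_cong) (simp_all add: eqj)
  also have "\<dots> = {C!((r mod k + j) mod k) | j. j < m}" by (rule setcompr_eq_image[symmetric])
  finally have S: "{c \<in> set C. E v c} = {C!((r mod k + j) mod k) | j. j < m}" .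
  have rk: "r mod k < k" using k5 by simp
  have cons: "consecutive_on_cycle C {c \<in> set C. E v c} b" if "m \<le> b" for b
    unfolding consecutive_on_cycle_def lenC
    by (rule exI[of _ "r mod k"], rule exI[of _ m]) (intro conjI rk m(1) that S)
  have c3: "consecutive_on_cycle C {c \<in> set C. E v c} 3" using m(2) by (rule cons)
  have c2: "\<not> E v x \<longrightarrow> consecutive_on_cycle C {c \<in> set C. E v c} 2"
  proof
    assume "\<not> E v x" then have "m \<le> 2" using m(4) by simp
    then show "consecutive_on_cycle C {c \<in> set C. E v c} 2" by (rule cons)
  qed
  show ?thesis using c3 c2 by (rule conjI)
qed

end
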